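(* In every finite three-player extensive-form game with perfect recall, $\Xi_T=\operatorname{co}\Xi^*_{T1}=\operatorname{co}\Xi^*_{T2}=\operatorname{co}(\Xi^*_{T1}\cup\Xi^*_{T2})$, where $\operatorname{co}$ denotes convex hull.
   Context: A finite extensive-form game is played on a tree; each internal node belongs to one of the players $T1,T2,O$ or to chance. The nodes of player $i$ are partitioned into information sets $\mathcal I_i$; all nodes of $I\in\mathcal I_i$ share the action set $A_I$. Perfect recall is assumed. The sequences of player $i$ are $\Sigma_i=\{(I,a):I\in\mathcal I_i,a\in A_I\}\cup\{\varnothing\}$. For an information set $I$ of player $i$, $\sigma(I)$ denotes the last pair $(I',a')$ of player $i$ on the root-to-$I$ path, or $\varnothing$ if $i$ does not act before $I$. Two information sets $I_i\in\mathcal I_i$, $I_j\in\mathcal I_j$ are connected ($I_i\rightleftharpoons I_j$) if there exist $v\in I_i$, $w\in I_j$ such that the root-to-$v$ path passes through $w$ or vice versa. A pair $(\sigma_i,\sigma_j)$ is relevant ($\sigma_i\bowtie\sigma_j$) if one of them is $\varnothing$ or $\sigma_i=(I_i,a_i)$, $\sigma_j=(I_j,a_j)$ with $I_i\rightleftharpoons I_j$; $\Sigma_{T1}\bowtie\Sigma_{T2}$ is the set of relevant pairs. Similarly $\sigma_i\bowtie I_j$ if $\sigma_i=\varnothing$ or $\sigma_i=(I_i,a_i)$ with $I_i\rightleftharpoons I_j$. A reduced-normal-form plan of player $i$ chooses an action at every information set of $i$ that remains reachable given the plan's own choices; their set is $\Pi_i$. For $\sigma=(I,a)$, $\Pi_i(\sigma)$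 is the set of plans prescribing all of $i$'s actions on the path to $I$ and playing $a$ at $I$; $\Pi_i(\varnothing)=\Pi_i$. The map $f$ sends $\mu_T\in\Delta(\Pi_{T1}\times\Pi_{T2})$ to the vector $f(\mu_T)$ indexed by relevant pairs with $f(\mu_T)[\sigma_{T1},\sigma_{T2}]=\sum_{\pi_1\in\Pi_{T1}(\sigma_{T1}),\pi_2\in\Pi_{T2}(\sigma_{T2})}\mu_T(\pi_1,\pi_2)$; $\Xi_T=f(\Delta(\Pi_{T1}\times\Pi_{T2}))$. The von Stengel–Forges polytope $\mathcal V_T$ is the set of nonnegative vectors $\xi$ indexed by relevant pairs with: $\xi[\varnothing,\varnothing]=1$; $\sum_{a\in A_{I}}\xi[(I,a),\sigma_{T2}]=\xi[\sigma(I),\sigma_{T2}]$ for all $I\in\mathcal I_{T1}$, $\sigma_{T2}\in\Sigma_{T2}$ with $I\bowtie\sigma_{T2}$; $\sum_{b\in A_{J}}\xi[\sigma_{T1},(J,b)]=\xi[\sigma_{T1},\sigma(J)]$ for all $J\in\mathcal I_{T2}$, $\sigma_{T1}\in\Sigma_{T1}$ with $\sigma_{T1}\bowtie J$. The semi-randomized correlation plans are $\Xi^*_{T1}=\{\xi\in\mathcal V_T:\xi[\varnothing,\sigma_{T2}]\in\{0,1\}\ \forall\sigma_{T2}\in\Sigma_{T2}\}$ and $\Xi^*_{T2}=\{\xi\in\mathcal V_T:\xi[\sigma_{T1},\varnothing]\in\{0,1\}\ \forall\sigma_{T1}\in\Sigma_{T1}\}$. *)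

theory Defs
  imports "HOL-Analysis.Analysis" "HOL-Library.Sublist"
begin

datatype player = T1 | T2 | O | Chance

text \<open>A game tree is given by its set of histories (nodes = finite sequences of
action labels, the root is the empty history, ancestor = prefix), the owner of
each internal node and an information-set label for each node. The
information sets of player i are the labels I together with the node set
{h internal. owner h = i, infoset h = I}. Payoffs and chance probabilities
play no role in the statement and are omitted.\<close>

record ('a, 'i) efg =
  hist :: "'a list set"
  owner :: "'a list \<Rightarrow> player"
  infoset :: "'a list \<Rightarrow> 'i"

definition internal :: "('a, 'i) efg \<Rightarrow> 'a list \<Rightarrow> bool" where
  "internal g h \<longleftrightarrow> h \<in> hist g \<and> (\<exists>a. h @ [a] \<in> hist g)"

definition acts :: "('a, 'i) efg \<Rightarrow> 'a list \<Rightarrow> 'a set" where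
  "acts g h = {a. h @ [a] \<in> hist g}"

definition isnodes :: "('a, 'i) efg \<Rightarrow> player \<Rightarrow> 'i \<Rightarrow> 'a list set" where
  "isnodes g i I = {h. internal g h \<and> owner g h = i \<and> infoset g h = I}"

definition infosets :: "('a, 'i) efg \<Rightarrow> player \<Rightarrow> 'i set" where
  "infosets g i = {infoset g h | h. internal g h \<and> owner g h = i}"

definition seqpath :: "('a, 'i) efg \<Rightarrow> player \<Rightarrow> 'a list \<Rightarrow> ('i \<times> 'a) list" where
  "seqpath g i h =
     map (\<lambda>k. (infoset g (take k h), h ! k)) (filter (\<lambda>k. owner g (take k h) = i) [0..<length h])"

definition wf_game :: "('a, 'i) efg \<Rightarrow> bool" where
  "wf_game g \<longleftrightarrow>
     finite (hist g) \<and> [] \<in> hist g \<and>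
     (\<forall>h \<in> hist g. \<forall>p. prefix p h \<longrightarrow> p \<in> hist g) \<and>
     (\<forall>i h h'. i \<noteq> Chance \<and> h \<in> isnodes g i (infoset g h) \<and> h' \<in> isnodes g i (infoset g h)
        \<longrightarrow> acts g h = acts g h')"

definition perfect_recall :: "('a, 'i) efg \<Rightarrow> bool" where
  "perfect_recall g \<longleftrightarrow>
     (\<forall>i I h h'. i \<noteq> Chance \<and> h \<in> isnodes g i I \<and> h' \<in> isnodes g i I
        \<longrightarrow> seqpath g i h = seqpath g i h')"

definition rep :: "('a, 'i) efg \<Rightarrow> player \<Rightarrow> 'i \<Rightarrow> 'a list" where
  "rep g i I = (SOME h. h \<in> isnodes g i I)"

definition acts_is :: "('a, 'i) efg \<Rightarrow> player \<Rightarrow> 'i \<Rightarrow> 'a set" where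
  "acts_is g i I = acts g (rep g i I)"

definition pathseq :: "('a, 'i) efg \<Rightarrow> player \<Rightarrow> 'i \<Rightarrow> ('i \<times> 'a) list" where
  "pathseq g i I = seqpath g i (rep g i I)"

text \<open>sigma(I); the empty sequence is represented by None.\<close>
definition parseq :: "('a, 'i) efg \<Rightarrow> player \<Rightarrow> 'i \<Rightarrow> ('i \<times> 'a) option" where
  "parseq g i I = (if pathseq g i I = [] then None else Some (last (pathseq g i I)))"

definition seqs :: "('a, 'i) efg \<Rightarrow> player \<Rightarrow> ('i \<times> 'a) option set" where
  "seqs g i = insert None {Some (I, a) | I a. I \<in> infosets g i \<and> a \<in> acts_is g i I}"

definition connected :: "('a, 'i) efg \<Rightarrow> 'i \<Rightarrow> 'i \<Rightarrow> bool" where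
  "connected g I J \<longleftrightarrow>
     (\<exists>v w. v \<in> isnodes g T1 I \<and> w \<in> isnodes g T2 J \<and> (prefix w v \<or> prefix v w))"

definition relevant :: "('a, 'i) efg \<Rightarrow> ('i \<times> 'a) option \<Rightarrow> ('i \<times> 'a) option \<Rightarrow> bool" where
  "relevant g s1 s2 \<longleftrightarrow> s1 = None \<or> s2 = None \<or>
     (\<exists>I a J b. s1 = Some (I, a) \<and> s2 = Some (J, b) \<and> connected g I J)"

definition relpairs :: "('a, 'i) efg \<Rightarrow> (('i \<times> 'a) option \<times> ('i \<times> 'a) option) set" where
  "relpairs g = {(s1, s2). s1 \<in> seqs g T1 \<and> s2 \<in> seqs g T2 \<and> relevant g s1 s2}"

definition rel_seq_is :: "('a, 'i) efg \<Rightarrow> ('i \<times> 'a) option \<Rightarrow> 'i \<Rightarrow> bool" where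
  "rel_seq_is g s1 J \<longleftrightarrow> s1 = None \<or> (\<exists>I a. s1 = Some (I, a) \<and> connected g I J)"

definition rel_is_seq :: "('a, 'i) efg \<Rightarrow> 'i \<Rightarrow> ('i \<times> 'a) option \<Rightarrow> bool" where
  "rel_is_seq g I s2 \<longleftrightarrow> s2 = None \<or> (\<exists>J b. s2 = Some (J, b) \<and> connected g I J)"

text \<open>A plan is a partial map from information sets to actions, defined exactly at
the information sets that remain reachable given the plan's own choices.\<close>
type_synonym ('i, 'a) plan = "'i \<Rightarrow> 'a option"

definition prescribes_path :: "('a, 'i) efg \<Rightarrow> player \<Rightarrow> ('i, 'a) plan \<Rightarrow> 'i \<Rightarrow> bool" where
  "prescribes_path g i \<pi> I \<longleftrightarrow> (\<forall>(J, b) \<in> set (pathseq g i I). \<pi> J = Some b)"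

definition rnf_plans :: "('a, 'i) efg \<Rightarrow> player \<Rightarrow> ('i, 'a) plan set" where
  "rnf_plans g i = {\<pi>. (\<forall>I. \<pi> I \<noteq> None \<longrightarrow> I \<in> infosets g i) \<and>
      (\<forall>I \<in> infosets g i. (\<pi> I \<noteq> None \<longleftrightarrow> prescribes_path g i \<pi> I) \<and>
                          (\<forall>a. \<pi> I = Some a \<longrightarrow> a \<in> acts_is g i I))}"

definition plans_of :: "('a, 'i) efg \<Rightarrow> player \<Rightarrow> ('i \<times> 'a) option \<Rightarrow> ('i, 'a) plan set" where
  "plans_of g i s = (case s of None \<Rightarrow> rnf_plans g i
     | Some (I, a) \<Rightarrow> {\<pi> \<in> rnf_plans g i. prescribes_path g i \<pi> I \<and> \<pi> I = Some a})"

text \<open>Vectors indexed by relevant pairs are represented as real functions on all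
pairs of sequences that vanish outside the relevant pairs.\<close>
type_synonym ('i, 'a) cvec = "('i \<times> 'a) option \<times> ('i \<times> 'a) option \<Rightarrow> real"

definition Delta_T :: "('a, 'i) efg \<Rightarrow> (('i, 'a) plan \<times> ('i, 'a) plan \<Rightarrow> real) set" where
  "Delta_T g = {\<mu>. (\<forall>x. 0 \<le> \<mu> x) \<and> (\<forall>x. x \<notin> rnf_plans g T1 \<times> rnf_plans g T2 \<longrightarrow> \<mu> x = 0) \<and>
                   (\<Sum>x \<in> rnf_plans g T1 \<times> rnf_plans g T2. \<mu> x) = 1}"

definition fmap :: "('a, 'i) efg \<Rightarrow> (('i, 'a) plan \<times> ('i, 'a) plan \<Rightarrow> real) \<Rightarrow> ('i, 'a) cvec" where
  "fmap g \<mu> = (\<lambda>(s1, s2). if (s1, s2) \<in> relpairs g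
      then (\<Sum>\<pi>1 \<in> plans_of g T1 s1. \<Sum>\<pi>2 \<in> plans_of g T2 s2. \<mu> (\<pi>1, \<pi>2)) else 0)"

definition Xi_T :: "('a, 'i) efg \<Rightarrow> ('i, 'a) cvec set" where
  "Xi_T g = fmap g ` Delta_T g"

definition VSF :: "('a, 'i) efg \<Rightarrow> ('i, 'a) cvec set" where
  "VSF g = {\<xi>. (\<forall>p. p \<notin> relpairs g \<longrightarrow> \<xi> p = 0) \<and> (\<forall>p \<in> relpairs g. 0 \<le> \<xi> p) \<and>
     \<xi> (None, None) = 1 \<and>
     (\<forall>I \<in> infosets g T1. \<forall>s2 \<in> seqs g T2. rel_is_seq g I s2 \<longrightarrow>
        (\<Sum>a \<in> acts_is g T1 I. \<xi> (Some (I, a), s2)) = \<xi> (parseq g T1 I, s2)) \<and>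
     (\<forall>J \<in> infosets g T2. \<forall>s1 \<in> seqs g T1. rel_seq_is g s1 J \<longrightarrow>
        (\<Sum>b \<in> acts_is g T2 J. \<xi> (s1, Some (J, b))) = \<xi> (s1, parseq g T2 J))}"

definition Xi_star_T1 :: "('a, 'i) efg \<Rightarrow> ('i, 'a) cvec set" where
  "Xi_star_T1 g = {\<xi> \<in> VSF g. \<forall>s2 \<in> seqs g T2. \<xi> (None, s2) \<in> {0, 1}}"

definition Xi_star_T2 :: "('a, 'i) efg \<Rightarrow> ('i, 'a) cvec set" where
  "Xi_star_T2 g = {\<xi> \<in> VSF g. \<forall>s1 \<in> seqs g T1. \<xi> (s1, None) \<in> {0, 1}}"

definition conv :: "('x \<Rightarrow> real) set \<Rightarrow> ('x \<Rightarrow> real) set" where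
  "conv S = {x. \<exists>k c p. (\<forall>j<(k::nat). 0 \<le> (c j :: real) \<and> p j \<in> S) \<and>
               (\<Sum>j<k. c j) = 1 \<and> x = (\<lambda>q. \<Sum>j<k. c j * p j q)}"

end

theory Submission
  imports Defs
begin


lemma seqpath_take:
  assumes "k \<le> length h"
  shows "seqpath g i (take k h) =
    map (\<lambda>j. (infoset g (take j h), h ! j)) (filter (\<lambda>j. owner g (take j h) = i) [0..<k])"
proof -
  have 1: "seqpath g i (take k h) = map (\<lambda>j. (infoset g (take j (take k h)), take k h ! j))
      (filter (\<lambda>j. owner g (take j (take k h)) = i) [0..<k])"
    unfolding seqpath_def length_take using assms by (simp only: min_absorb2)
  have 2: "filter (\<lambda>j. owner g (take j (take k h)) = i) [0..<k] = filter (\<lambda>j. owner g (take j h) = i) [0..<k]"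
    by (rule filter_cong) (auto simp: min_def)
  show ?thesis unfolding 1 2 by (rule map_cong) (auto simp: min_def)
qed

lemma seqpath_last:
  assumes "seqpath g i h \<noteq> []"
  obtains k where "k < length h" "owner g (take k h) = i"
    "seqpath g i h = seqpath g i (take k h) @ [(infoset g (take k h), h ! k)]"
proof -
  let ?P = "\<lambda>j. owner g (take j h) = i"
  let ?S = "{j. j < length h \<and> ?P j}"
  have ne: "?S \<noteq> {}" using assms by (auto simp: seqpath_def filter_empty_conv)
  define k where "k = Max ?S"
  have fin: "finite ?S" by auto
  have kS: "k \<in> ?S" unfolding k_def using Max_in[OF fin ne] .
  have kmax: "\<And>j. j < length h \<Longrightarrow> ?P j \<Longrightarrow> j \<le> k" unfolding k_def using fin by auto
  have s1: "[0..<length h] = [0..<k] @ [k..<length h]"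
    using upt_add_eq_append[of 0 k "length h - k"] kS by simp
  have s2: "[k..<length h] = k # [Suc k..<length h]" using kS by (simp add: upt_conv_Cons)
  have emp: "filter ?P [Suc k..<length h] = []"
    using kmax by (auto simp: filter_empty_conv) (metis not_less_eq_eq)
  have "seqpath g i h = map (\<lambda>j. (infoset g (take j h), h ! j)) (filter ?P [0..<length h])"
    by (simp add: seqpath_def)
  also have "\<dots> = seqpath g i (take k h) @ [(infoset g (take k h), h ! k)]"
    unfolding s1 s2 using kS by (simp add: emp seqpath_take[of k h g i])
  finally show ?thesis using kS that by auto
qed


definition rconstr :: "('a, 'i) efg \<Rightarrow> player \<Rightarrow> (('i \<times> 'a) option \<Rightarrow> real) \<Rightarrow> bool" where
  "rconstr g i x \<longleftrightarrow> (\<forall>s\<in>seqs g i. 0 \<le> x s) \<and>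
     (\<forall>I\<in>infosets g i. (\<Sum>a\<in>acts_is g i I. x (Some (I, a))) = x (parseq g i I))"

locale game =
  fixes g :: "('a, 'i) efg"
  assumes wf: "wf_game g" and pr: "perfect_recall g"
begin

lemma hist_prefix: "h \<in> hist g \<Longrightarrow> prefix p h \<Longrightarrow> p \<in> hist g"
  using wf unfolding wf_game_def by blast

lemma finite_hist: "finite (hist g)" using wf unfolding wf_game_def by blast

lemma isnodesD: "h \<in> isnodes g i I \<Longrightarrow> internal g h \<and> owner g h = i \<and> infoset g h = I"
  by (simp add: isnodes_def)

lemma infosets_iff: "I \<in> infosets g i \<longleftrightarrow> isnodes g i I \<noteq> {}"
  by (auto simp: infosets_def isnodes_def)

lemma rep_in: "I \<in> infosets g i \<Longrightarrow> rep g i I \<in> isnodes g i I"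
  unfolding rep_def by (rule someI_ex) (auto simp: infosets_iff)

lemma node_infoset: "v \<in> isnodes g i I \<Longrightarrow> I \<in> infosets g i"
  by (auto simp: infosets_iff)

lemma pr_seq: "i \<noteq> Chance \<Longrightarrow> h \<in> isnodes g i I \<Longrightarrow> h' \<in> isnodes g i I \<Longrightarrow>
    seqpath g i h = seqpath g i h'"
  using pr unfolding perfect_recall_def by blast

lemma pathseq_node: "i \<noteq> Chance \<Longrightarrow> v \<in> isnodes g i I \<Longrightarrow> seqpath g i v = pathseq g i I"
  unfolding pathseq_def using pr_seq rep_in node_infoset by blast

lemma acts_node: "i \<noteq> Chance \<Longrightarrow> v \<in> isnodes g i I \<Longrightarrow> acts g v = acts_is g i I"
proof -
  assume a: "i \<noteq> Chance" "v \<in> isnodes g i I"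
  then have r: "rep g i I \<in> isnodes g i I" using rep_in node_infoset by blast
  have "infoset g v = I" using a isnodesD by blast
  then show ?thesis unfolding acts_is_def using wf a r unfolding wf_game_def by metis
qed

lemma finite_acts: "finite (acts g h)"
proof -
  have "acts g h = (\<lambda>a. h @ [a]) -` hist g" by (auto simp: acts_def)
  then show ?thesis using finite_hist by (simp add: finite_vimageI inj_on_def)
qed

lemma finite_acts_is: "finite (acts_is g i I)" by (simp add: acts_is_def finite_acts)

lemma finite_infosets: "finite (infosets g i)"
proof -
  have "infosets g i \<subseteq> infoset g ` hist g" by (auto simp: infosets_def internal_def)
  then show ?thesis using finite_hist finite_surj by blast
qed

lemma take_node:
  assumes "v \<in> hist g" "k < length v" "owner g (take k v) = i"
  shows "take k v \<in> isnodes g i (infoset g (take k v)) \<and> v ! k \<in> acts g (take k v)"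
proof -
  have "take (Suc k) v \<in> hist g" using assms hist_prefix take_is_prefix by blast
  moreover have "take (Suc k) v = take k v @ [v ! k]" using assms by (simp add: take_Suc_conv_app_nth)
  ultimately have "take k v @ [v ! k] \<in> hist g" by simp
  moreover have "take k v \<in> hist g" using assms hist_prefix take_is_prefix by blast
  ultimately show ?thesis using assms by (auto simp: isnodes_def internal_def acts_def)
qed

lemma node_last:
  assumes "v \<in> isnodes g i I" "seqpath g i v \<noteq> []"
  shows "\<exists>v'. prefix v' v \<and> v' \<in> isnodes g i (fst (last (seqpath g i v))) \<and>
     snd (last (seqpath g i v)) \<in> acts g v' \<and> seqpath g i v = seqpath g i v' @ [last (seqpath g i v)]"
proof -
  obtain k where k: "k < length v" "owner g (take k v) = i"
    "seqpath g i v = seqpath g i (take k v) @ [(infoset g (take k v), v ! k)]"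
    using seqpath_last[OF assms(2)] by blast
  have "v \<in> hist g" using assms(1) by (auto simp: isnodes_def internal_def)
  then have "take k v \<in> isnodes g i (infoset g (take k v)) \<and> v ! k \<in> acts g (take k v)"
    using take_node k by blast
  then show ?thesis using k by (intro exI[of _ "take k v"]) (auto simp: take_is_prefix)
qed

lemma parseq_Some:
  assumes "i \<noteq> Chance" "I \<in> infosets g i" "parseq g i I = Some (I', a')"
  shows "I' \<in> infosets g i \<and> a' \<in> acts_is g i I' \<and> pathseq g i I = pathseq g i I' @ [(I', a')]
    \<and> (\<forall>v \<in> isnodes g i I. \<exists>v'. v' \<in> isnodes g i I' \<and> prefix v' v)"
proof -
  have ne: "pathseq g i I \<noteq> []" and l: "last (pathseq g i I) = (I', a')"
    using assms(3) by (auto simp: parseq_def split: if_splits)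
  have r: "rep g i I \<in> isnodes g i I" using rep_in assms by blast
  obtain v' where v': "prefix v' (rep g i I)" "v' \<in> isnodes g i I'" "a' \<in> acts g v'"
    "pathseq g i I = seqpath g i v' @ [(I', a')]"
    using node_last[OF r] ne l unfolding pathseq_def by fastforce
  have "seqpath g i v' = pathseq g i I'" using pathseq_node assms v' by blast
  moreover have "acts g v' = acts_is g i I'" using acts_node assms v' by blast
  moreover have "\<forall>v \<in> isnodes g i I. \<exists>v'. v' \<in> isnodes g i I' \<and> prefix v' v"
  proof
    fix v assume v: "v \<in> isnodes g i I"
    have "seqpath g i v = pathseq g i I" using pathseq_node assms v by blast
    then show "\<exists>v'. v' \<in> isnodes g i I' \<and> prefix v' v" using node_last[OF v] ne l by fastforce
  qed
  ultimately show ?thesis using v' node_infoset by auto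
qed

lemma infoset_induct[consumes 2]:
  assumes "i \<noteq> Chance" "I \<in> infosets g i"
    and step: "\<And>I. I \<in> infosets g i \<Longrightarrow> (\<And>I' a'. parseq g i I = Some (I', a') \<Longrightarrow> P I') \<Longrightarrow> P I"
  shows "P I"
proof -
  have "\<forall>I. I \<in> infosets g i \<longrightarrow> length (pathseq g i I) = n \<longrightarrow> P I" for n
  proof (induction n rule: less_induct)
    case (less n)
    show ?case
    proof (intro allI impI)
      fix I assume I: "I \<in> infosets g i" "length (pathseq g i I) = n"
      show "P I"
      proof (rule step[OF I(1)])
        fix I' a' assume p: "parseq g i I = Some (I', a')"
        from parseq_Some[OF assms(1) I(1) p] have "I' \<in> infosets g i"
          "length (pathseq g i I') < n" using I(2) by auto
        then show "P I'" using less by blast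
      qed
    qed
  qed
  then show ?thesis using assms(2) by blast
qed

lemma Some_in_seqs: "Some (I, a) \<in> seqs g i \<longleftrightarrow> I \<in> infosets g i \<and> a \<in> acts_is g i I"
  by (auto simp: seqs_def)

lemma None_in_seqs: "None \<in> seqs g i" by (simp add: seqs_def)

lemma parseq_in_seqs: "i \<noteq> Chance \<Longrightarrow> I \<in> infosets g i \<Longrightarrow> parseq g i I \<in> seqs g i"
  using parseq_Some[of i I] by (cases "parseq g i I") (auto simp: Some_in_seqs None_in_seqs)

lemma finite_seqs: "finite (seqs g i)"
proof -
  have "seqs g i = insert None ((\<lambda>(I, a). Some (I, a)) ` (SIGMA I:infosets g i. acts_is g i I))"
    by (auto simp: seqs_def)
  then show ?thesis by (simp add: finite_infosets finite_acts_is finite_SigmaI)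
qed

lemma rconstr_nn: "rconstr g i x \<Longrightarrow> s \<in> seqs g i \<Longrightarrow> 0 \<le> x s"
  unfolding rconstr_def by blast

lemma rconstr_eq: "rconstr g i x \<Longrightarrow> I \<in> infosets g i \<Longrightarrow>
   (\<Sum>a\<in>acts_is g i I. x (Some (I, a))) = x (parseq g i I)"
  unfolding rconstr_def by blast

lemma rconstr_nn_acts: "rconstr g i x \<Longrightarrow> I \<in> infosets g i \<Longrightarrow> a \<in> acts_is g i I \<Longrightarrow> 0 \<le> x (Some (I, a))"
  using rconstr_nn Some_in_seqs by blast

lemma rconstr_zero_step:
  assumes "rconstr g i x" "I \<in> infosets g i" "x (parseq g i I) = 0"
  shows "\<forall>a\<in>acts_is g i I. x (Some (I, a)) = 0"
proof -
  have "(\<Sum>a\<in>acts_is g i I. x (Some (I, a))) = 0" using rconstr_eq[OF assms(1,2)] assms(3) by simp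
  moreover have "\<forall>a\<in>acts_is g i I. 0 \<le> x (Some (I, a))"
    using rconstr_nn_acts[OF assms(1,2)] by blast
  ultimately show ?thesis using sum_nonneg_eq_0_iff[OF finite_acts_is[of i I], of "\<lambda>a. x (Some (I, a))"] by simp
qed

lemma rconstr_le_step:
  assumes "rconstr g i x" "I \<in> infosets g i" "a \<in> acts_is g i I"
  shows "x (Some (I, a)) \<le> x (parseq g i I)"
proof -
  have "x (Some (I, a)) \<le> (\<Sum>a\<in>acts_is g i I. x (Some (I, a)))"
    using assms(3) rconstr_nn_acts[OF assms(1,2)] by (intro member_le_sum) (auto simp: finite_acts_is)
  then show ?thesis using rconstr_eq[OF assms(1,2)] by simp
qed

lemma seqs_cases:
  assumes "s \<in> seqs g i"
  obtains "s = None" | I a where "s = Some (I, a)" "I \<in> infosets g i" "a \<in> acts_is g i I"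
  using assms unfolding seqs_def by blast

lemma parseq_cases:
  assumes "i \<noteq> Chance" "I \<in> infosets g i"
  obtains "parseq g i I = None"
   | I' a' where "parseq g i I = Some (I', a')" "I' \<in> infosets g i" "a' \<in> acts_is g i I'"
     "pathseq g i I = pathseq g i I' @ [(I', a')]"
     "\<forall>v \<in> isnodes g i I. \<exists>v'. v' \<in> isnodes g i I' \<and> prefix v' v"
proof (cases "parseq g i I")
  case None then show ?thesis using that by blast
next
  case (Some q)
  then obtain I' a' where q: "parseq g i I = Some (I', a')" by (cases q) auto
  then show ?thesis using that parseq_Some[OF assms q] by blast
qed

lemma rconstr_zero:
  assumes "i \<noteq> Chance" "rconstr g i x" "x None = 0" "s \<in> seqs g i"
  shows "x s = 0"
proof -
  have *: "x (parseq g i I) = 0 \<and> (\<forall>a\<in>acts_is g i I. x (Some (I, a)) = 0)" if "I \<in> infosets g i" for I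
    using assms(1) that
  proof (induction rule: infoset_induct)
    case (1 I)
    have p0: "x (parseq g i I) = 0"
    proof (cases rule: parseq_cases[OF assms(1) 1(1)])
      case 1 then show ?thesis using assms by simp
    next
      case (2 I' a')
      then show ?thesis using "1.IH"[OF 2(1)] by simp
    qed
    then show ?case using rconstr_zero_step[OF assms(2) 1(1)] by blast
  qed
  show ?thesis using assms(4)
    by (cases rule: seqs_cases) (use assms(3) * in auto)
qed

lemma rconstr_le:
  assumes "i \<noteq> Chance" "rconstr g i x" "s \<in> seqs g i"
  shows "x s \<le> x None"
proof -
  have *: "x (parseq g i I) \<le> x None \<and> (\<forall>a\<in>acts_is g i I. x (Some (I, a)) \<le> x None)" if "I \<in> infosets g i" for I
    using assms(1) that
  proof (induction rule: infoset_induct)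
    case (1 I)
    have p0: "x (parseq g i I) \<le> x None"
    proof (cases rule: parseq_cases[OF assms(1) 1(1)])
      case 1 then show ?thesis using assms by simp
    next
      case (2 I' a')
      then show ?thesis using "1.IH"[OF 2(1)] by simp
    qed
    then show ?case using rconstr_le_step[OF assms(2) 1(1)] by force
  qed
  show ?thesis using assms(3)
    by (cases rule: seqs_cases) (use * in auto)
qed

end




context game begin

lemma rnf_Some: "\<pi> \<in> rnf_plans g i \<Longrightarrow> \<pi> \<in> plans_of g i (Some (I, a)) \<longleftrightarrow> \<pi> I = Some a"
  unfolding plans_of_def rnf_plans_def by auto

lemma parseq_None: "parseq g i I = None \<Longrightarrow> pathseq g i I = []"
  by (auto simp: parseq_def split: if_splits)

lemma prescribes_parseq:
  assumes "i \<noteq> Chance" "I \<in> infosets g i"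
  shows "prescribes_path g i \<pi> I \<longleftrightarrow> (case parseq g i I of None \<Rightarrow> True
     | Some (I', a') \<Rightarrow> prescribes_path g i \<pi> I' \<and> \<pi> I' = Some a')"
proof (cases rule: parseq_cases[OF assms])
  case 1
  then show ?thesis using parseq_None[OF 1] by (simp add: prescribes_path_def)
next
  case (2 I' a')
  then show ?thesis by (auto simp: prescribes_path_def)
qed

lemma plans_of_parseq:
  assumes "i \<noteq> Chance" "I \<in> infosets g i" "\<pi> \<in> rnf_plans g i"
  shows "\<pi> \<in> plans_of g i (parseq g i I) \<longleftrightarrow> prescribes_path g i \<pi> I"
  using prescribes_parseq[OF assms(1,2)] assms(3)
  by (cases "parseq g i I") (auto simp: plans_of_def)

lemma ind_constr:
  assumes "i \<noteq> Chance" "I \<in> infosets g i" "\<pi> \<in> rnf_plans g i"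
  shows "(\<Sum>a\<in>acts_is g i I. if \<pi> \<in> plans_of g i (Some (I, a)) then 1 else 0) =
    (if \<pi> \<in> plans_of g i (parseq g i I) then 1 else (0::real))"
proof -
  have L: "(\<Sum>a\<in>acts_is g i I. if \<pi> \<in> plans_of g i (Some (I, a)) then 1 else 0) =
     (\<Sum>a\<in>acts_is g i I. if \<pi> I = Some a then 1 else (0::real))"
    using rnf_Some[OF assms(3)] by (intro sum.cong) auto
  have R: "\<pi> \<in> plans_of g i (parseq g i I) \<longleftrightarrow> \<pi> I \<noteq> None"
    using plans_of_parseq[OF assms] assms(2,3) unfolding rnf_plans_def by auto
  show ?thesis
  proof (cases "\<pi> I")
    case None then show ?thesis unfolding L R by simp
  next
    case (Some c)
    then have c: "c \<in> acts_is g i I" using assms(2,3) unfolding rnf_plans_def by auto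
    have "(\<Sum>a\<in>acts_is g i I. if \<pi> I = Some a then 1 else (0::real)) = (\<Sum>a\<in>acts_is g i I. if a = c then 1 else 0)"
      using Some by (intro sum.cong) auto
    also have "\<dots> = 1" using c finite_acts_is by simp
    finally show ?thesis unfolding L R using Some by simp
  qed
qed

lemma finite_rnf: "finite (rnf_plans g i)"
proof -
  define A where "A = infosets g i"
  define B where "B = (\<Union>I\<in>infosets g i. acts_is g i I)"
  have fA: "finite A" using finite_infosets A_def by simp
  have fB: "finite B" using finite_infosets finite_acts_is B_def by simp
  have "rnf_plans g i \<subseteq> (\<Union>A'\<in>Pow A. {m. dom m = A' \<and> ran m \<subseteq> B})"
  proof
    fix \<pi> assume p: "\<pi> \<in> rnf_plans g i"
    have "dom \<pi> \<subseteq> A" using p unfolding rnf_plans_def A_def by auto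
    moreover have "ran \<pi> \<subseteq> B"
    proof
      fix a assume "a \<in> ran \<pi>"
      then obtain I where "\<pi> I = Some a" by (auto simp: ran_def)
      then show "a \<in> B" using p unfolding rnf_plans_def B_def by force
    qed
    ultimately show "\<pi> \<in> (\<Union>A'\<in>Pow A. {m. dom m = A' \<and> ran m \<subseteq> B})" by blast
  qed
  moreover have "finite (\<Union>A'\<in>Pow A. {m. dom m = A' \<and> ran m \<subseteq> B})"
    using fA fB by (intro finite_UN_I) (auto intro: finite_set_of_finite_maps finite_subset)
  ultimately show ?thesis using finite_subset by blast
qed

lemma path_sub:
  assumes "i \<noteq> Chance" "I \<in> infosets g i"
  shows "\<forall>(J, b)\<in>set (pathseq g i I). J \<in> infosets g i \<and> set (pathseq g i J) \<subseteq> set (pathseq g i I)"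
  using assms
proof (induction rule: infoset_induct)
  case (1 I)
  show ?case
  proof (cases rule: parseq_cases[OF assms(1) 1(1)])
    case 1
    then show ?thesis using parseq_None by simp
  next
    case (2 I' a')
    show ?thesis using "1.IH"[OF 2(1)] 2 by auto
  qed
qed

lemma ex_pos:
  assumes "rconstr g i x" "I \<in> infosets g i" "0 < x (parseq g i I)"
  shows "\<exists>a\<in>acts_is g i I. 0 < x (Some (I, a))"
proof (rule ccontr)
  assume "\<not> ?thesis"
  then have "\<forall>a\<in>acts_is g i I. x (Some (I, a)) \<le> 0" by auto
  then have "(\<Sum>a\<in>acts_is g i I. x (Some (I, a))) \<le> 0" by (intro sum_nonpos) auto
  then show False using rconstr_eq[OF assms(1,2)] assms(3) by simp
qed

lemma exists_plan:
  assumes "i \<noteq> Chance" "rconstr g i x" "0 < x None"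
  shows "\<exists>\<pi>\<in>rnf_plans g i. \<forall>I a. \<pi> I = Some a \<longrightarrow> 0 < x (Some (I, a))"
proof -
  define c where "c I = (SOME a. a \<in> acts_is g i I \<and> 0 < x (Some (I, a)))" for I
  have cgood: "c I \<in> acts_is g i I \<and> 0 < x (Some (I, c I))"
    if "I \<in> infosets g i" "0 < x (parseq g i I)" for I
    unfolding c_def by (rule someI_ex) (use ex_pos[OF assms(2) that] in blast)
  define ok where "ok I \<longleftrightarrow> (\<forall>(J, b)\<in>set (pathseq g i I). c J = b)" for I
  define \<pi> where "\<pi> I = (if I \<in> infosets g i \<and> ok I then Some (c I) else None)" for I
  have pos: "0 < x (parseq g i I)" if "I \<in> infosets g i" "ok I" for I
    using assms(1) that(1) that(2)
  proof (induction rule: infoset_induct)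
    case (1 I)
    show ?case
    proof (cases rule: parseq_cases[OF assms(1) 1(1)])
      case 1 then show ?thesis using assms(3) by simp
    next
      case (2 I' a')
      have okI': "ok I'" using "1.prems" 2(4) unfolding ok_def by auto
      have "c I' = a'" using "1.prems" 2(4) unfolding ok_def by auto
      then show ?thesis using cgood[OF 2(2) "1.IH"[OF 2(1) okI']] 2(1) by simp
    qed
  qed
  have "\<pi> \<in> rnf_plans g i"
    unfolding rnf_plans_def
  proof (intro CollectI conjI allI impI ballI)
    fix I assume "\<pi> I \<noteq> None" then show "I \<in> infosets g i" by (auto simp: \<pi>_def split: if_splits)
  next
    fix I assume I: "I \<in> infosets g i"
    show "\<pi> I \<noteq> None \<longleftrightarrow> prescribes_path g i \<pi> I"
    proof
      assume "\<pi> I \<noteq> None"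
      then have okI: "ok I" by (auto simp: \<pi>_def split: if_splits)
      show "prescribes_path g i \<pi> I"
        unfolding prescribes_path_def
      proof (clarify)
        fix J b assume Jb: "(J, b) \<in> set (pathseq g i I)"
        then have "J \<in> infosets g i" "set (pathseq g i J) \<subseteq> set (pathseq g i I)"
          using path_sub[OF assms(1) I] by auto
        moreover have "c J = b" using okI Jb unfolding ok_def by auto
        ultimately show "\<pi> J = Some b" using okI unfolding \<pi>_def ok_def by auto
      qed
    next
      assume "prescribes_path g i \<pi> I"
      then have "ok I" unfolding prescribes_path_def ok_def \<pi>_def by (auto split: if_splits)
      then show "\<pi> I \<noteq> None" using I by (simp add: \<pi>_def)
    qed
  next
    fix I a assume I: "I \<in> infosets g i" and a: "\<pi> I = Some a"
    then have "ok I" "a = c I" by (auto simp: \<pi>_def split: if_splits)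
    then show "a \<in> acts_is g i I" using cgood[OF I pos[OF I]] by simp
  qed
  moreover have "\<forall>I a. \<pi> I = Some a \<longrightarrow> 0 < x (Some (I, a))"
  proof (intro allI impI)
    fix I a assume a: "\<pi> I = Some a"
    then have I: "I \<in> infosets g i" "ok I" "a = c I" by (auto simp: \<pi>_def split: if_splits)
    then show "0 < x (Some (I, a))" using cgood[OF I(1) pos[OF I(1,2)]] by simp
  qed
  ultimately show ?thesis by blast
qed

lemma plans_of_sub: "plans_of g i s \<subseteq> rnf_plans g i"
  by (auto simp: plans_of_def split: option.splits)

lemma finite_plans_of: "finite (plans_of g i s)"
  using finite_subset[OF plans_of_sub finite_rnf] .

lemma decomp_aux:
  assumes "i \<noteq> Chance"
  shows "\<forall>x. rconstr g i x \<longrightarrow> card {s\<in>seqs g i. x s \<noteq> 0} = n \<longrightarrow>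
    (\<exists>p. (\<forall>\<pi>. 0 \<le> p \<pi>) \<and> (\<forall>\<pi>. \<pi> \<notin> rnf_plans g i \<longrightarrow> p \<pi> = 0) \<and>
         (\<forall>s\<in>seqs g i. x s = (\<Sum>\<pi>\<in>plans_of g i s. p \<pi>)))"
proof (induction n rule: less_induct)
  case (less n)
  show ?case
  proof (intro allI impI)
    fix x assume x: "rconstr g i x" and n: "card {s\<in>seqs g i. x s \<noteq> 0} = n"
    have x0: "0 \<le> x None" using rconstr_nn[OF x None_in_seqs] .
    show "\<exists>p. (\<forall>\<pi>. 0 \<le> p \<pi>) \<and> (\<forall>\<pi>. \<pi> \<notin> rnf_plans g i \<longrightarrow> p \<pi> = 0) \<and>
         (\<forall>s\<in>seqs g i. x s = (\<Sum>\<pi>\<in>plans_of g i s. p \<pi>))"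
    proof (cases "x None = 0")
      case True
      then have "\<forall>s\<in>seqs g i. x s = 0" using rconstr_zero[OF assms x] by blast
      then show ?thesis by (intro exI[of _ "\<lambda>_. 0"]) auto
    next
      case False
      then have xpos: "0 < x None" using x0 by simp
      obtain \<pi> where \<pi>: "\<pi> \<in> rnf_plans g i" "\<forall>I a. \<pi> I = Some a \<longrightarrow> 0 < x (Some (I, a))"
        using exists_plan[OF assms x xpos] by blast
      define S where "S = {s\<in>seqs g i. \<pi> \<in> plans_of g i s}"
      have fS: "finite S" using finite_seqs S_def by simp
      have NS: "None \<in> S" using \<pi>(1) None_in_seqs by (simp add: S_def plans_of_def)
      have Spos: "0 < x s" if "s \<in> S" for s
      proof -
        have s: "s \<in> seqs g i" "\<pi> \<in> plans_of g i s" using that S_def by auto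
        show ?thesis using s(1)
        proof (cases rule: seqs_cases)
          case 1 then show ?thesis using xpos by simp
        next
          case (2 I a)
          then show ?thesis using s(2) rnf_Some[OF \<pi>(1)] \<pi>(2) by auto
        qed
      qed
      define l where "l = Min (x ` S)"
      have lin: "l \<in> x ` S" unfolding l_def using fS NS by (intro Min_in) auto
      then obtain s0 where s0: "s0 \<in> S" "x s0 = l" by auto
      have lpos: "0 < l" using Spos s0 by auto
      have lle: "l \<le> x s" if "s \<in> S" for s unfolding l_def using fS that by auto
      define ind where "ind s = (if \<pi> \<in> plans_of g i s then 1 else (0::real))" for s
      define x' where "x' s = x s - l * ind s" for s
      have x': "rconstr g i x'"
        unfolding rconstr_def
      proof (intro conjI ballI)
        fix s assume s: "s \<in> seqs g i"
        show "0 \<le> x' s"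
        proof (cases "s \<in> S")
          case True then show ?thesis using lle[OF True] by (simp add: x'_def ind_def S_def)
        next
          case False then show ?thesis using s rconstr_nn[OF x s] by (simp add: x'_def ind_def S_def)
        qed
      next
        fix I assume I: "I \<in> infosets g i"
        have "(\<Sum>a\<in>acts_is g i I. x' (Some (I, a))) =
            (\<Sum>a\<in>acts_is g i I. x (Some (I, a))) - l * (\<Sum>a\<in>acts_is g i I. ind (Some (I, a)))"
          unfolding x'_def by (simp add: sum_subtractf sum_distrib_left)
        also have "\<dots> = x (parseq g i I) - l * ind (parseq g i I)"
          using rconstr_eq[OF x I] ind_constr[OF assms I \<pi>(1)] unfolding ind_def by simp
        finally show "(\<Sum>a\<in>acts_is g i I. x' (Some (I, a))) = x' (parseq g i I)"
          unfolding x'_def .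
      qed
      have sub: "{s\<in>seqs g i. x' s \<noteq> 0} \<subset> {s\<in>seqs g i. x s \<noteq> 0}"
      proof
        show "{s\<in>seqs g i. x' s \<noteq> 0} \<subseteq> {s\<in>seqs g i. x s \<noteq> 0}"
        proof clarify
          fix s assume s: "s \<in> seqs g i" "x' s \<noteq> 0" "x s = 0"
          then have "s \<notin> S" using Spos by fastforce
          then show False using s by (simp add: x'_def ind_def S_def)
        qed
        have "s0 \<in> seqs g i" "x s0 \<noteq> 0" "x' s0 = 0" using s0 lpos S_def
          by (auto simp: x'_def ind_def)
        then show "{s\<in>seqs g i. x' s \<noteq> 0} \<noteq> {s\<in>seqs g i. x s \<noteq> 0}" by blast
      qed
      have "card {s\<in>seqs g i. x' s \<noteq> 0} < n"
        using psubset_card_mono[OF _ sub] finite_seqs n by simp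
      then obtain p' where p': "\<forall>\<pi>. 0 \<le> p' \<pi>" "\<forall>\<pi>. \<pi> \<notin> rnf_plans g i \<longrightarrow> p' \<pi> = 0"
        "\<forall>s\<in>seqs g i. x' s = (\<Sum>\<pi>\<in>plans_of g i s. p' \<pi>)"
        using less x' by blast
      define p where "p \<sigma> = p' \<sigma> + (if \<sigma> = \<pi> then l else 0)" for \<sigma>
      have "\<forall>s\<in>seqs g i. x s = (\<Sum>\<sigma>\<in>plans_of g i s. p \<sigma>)"
      proof
        fix s assume s: "s \<in> seqs g i"
        have "(\<Sum>\<sigma>\<in>plans_of g i s. p \<sigma>) = (\<Sum>\<sigma>\<in>plans_of g i s. p' \<sigma>) +
            (\<Sum>\<sigma>\<in>plans_of g i s. (if \<sigma> = \<pi> then l else 0))"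
          unfolding p_def by (simp add: sum.distrib)
        also have "\<dots> = x' s + l * ind s"
          using p'(3) s finite_plans_of by (simp add: ind_def)
        finally show "x s = (\<Sum>\<sigma>\<in>plans_of g i s. p \<sigma>)" by (simp add: x'_def)
      qed
      moreover have "\<forall>\<sigma>. 0 \<le> p \<sigma>" using p'(1) lpos by (simp add: p_def)
      moreover have "\<forall>\<sigma>. \<sigma> \<notin> rnf_plans g i \<longrightarrow> p \<sigma> = 0" using p'(2) \<pi>(1) by (auto simp: p_def)
      ultimately show ?thesis by blast
    qed
  qed
qed

lemma decomp:
  assumes "i \<noteq> Chance" "rconstr g i x"
  shows "\<exists>p. (\<forall>\<pi>. 0 \<le> p \<pi>) \<and> (\<forall>\<pi>. \<pi> \<notin> rnf_plans g i \<longrightarrow> p \<pi> = 0) \<and>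
         (\<forall>s\<in>seqs g i. x s = (\<Sum>\<pi>\<in>plans_of g i s. p \<pi>))"
  using decomp_aux[OF assms(1)] assms(2) by blast

end




context game begin

lemma T1nc: "T1 \<noteq> Chance" and T2nc: "T2 \<noteq> Chance" by auto

lemma conn_par1:
  assumes "connected g I J" "parseq g T1 I = Some (I', a')"
  shows "connected g I' J"
proof -
  obtain v w where vw: "v \<in> isnodes g T1 I" "w \<in> isnodes g T2 J" "prefix w v \<or> prefix v w"
    using assms(1) unfolding connected_def by blast
  have I: "I \<in> infosets g T1" using node_infoset vw(1) by blast
  obtain v' where v': "v' \<in> isnodes g T1 I'" "prefix v' v"
    using parseq_Some[OF _ I assms(2)] vw(1) by auto
  have "prefix w v' \<or> prefix v' w"
    using vw(3) v'(2) prefix_same_cases prefix_order.trans by blast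
  then show ?thesis unfolding connected_def using v'(1) vw(2) by blast
qed

lemma conn_par2:
  assumes "connected g I J" "parseq g T2 J = Some (J', b')"
  shows "connected g I J'"
proof -
  obtain v w where vw: "v \<in> isnodes g T1 I" "w \<in> isnodes g T2 J" "prefix w v \<or> prefix v w"
    using assms(1) unfolding connected_def by blast
  have J: "J \<in> infosets g T2" using node_infoset vw(2) by blast
  obtain w' where w': "w' \<in> isnodes g T2 J'" "prefix w' w"
    using parseq_Some[OF _ J assms(2)] vw(2) by auto
  have "prefix w' v \<or> prefix v w'"
    using vw(3) w'(2) prefix_same_cases prefix_order.trans by blast
  then show ?thesis unfolding connected_def using w'(1) vw(1) by blast
qed

lemma rel_is_seq_of: "relevant g (Some (I, a)) s2 \<Longrightarrow> rel_is_seq g I s2"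
  unfolding relevant_def rel_is_seq_def by auto

lemma rel_seq_is_of: "relevant g s1 (Some (J, b)) \<Longrightarrow> rel_seq_is g s1 J"
  unfolding relevant_def rel_seq_is_def by auto

lemma rel_of_is_seq: "rel_is_seq g I s2 \<Longrightarrow> relevant g (Some (I, a)) s2"
  unfolding relevant_def rel_is_seq_def by auto

lemma rel_of_seq_is: "rel_seq_is g s1 J \<Longrightarrow> relevant g s1 (Some (J, b))"
  unfolding relevant_def rel_seq_is_def by auto

lemma rel_par1: "rel_is_seq g I s2 \<Longrightarrow> relevant g (parseq g T1 I) s2"
  unfolding relevant_def rel_is_seq_def
  by (cases "parseq g T1 I") (auto dest: conn_par1)

lemma rel_par2: "rel_seq_is g s1 J \<Longrightarrow> relevant g s1 (parseq g T2 J)"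
  unfolding relevant_def rel_seq_is_def
  by (cases "parseq g T2 J") (auto dest: conn_par2)

lemma relpairsI: "s1 \<in> seqs g T1 \<Longrightarrow> s2 \<in> seqs g T2 \<Longrightarrow> relevant g s1 s2 \<Longrightarrow> (s1, s2) \<in> relpairs g"
  by (simp add: relpairs_def)

lemma relpairsD: "(s1, s2) \<in> relpairs g \<Longrightarrow> s1 \<in> seqs g T1 \<and> s2 \<in> seqs g T2 \<and> relevant g s1 s2"
  by (simp add: relpairs_def)

lemma rel_None1: "relevant g None s" and rel_None2: "relevant g s None"
  by (auto simp: relevant_def)

lemma vsf_out: "\<xi> \<in> VSF g \<Longrightarrow> p \<notin> relpairs g \<Longrightarrow> \<xi> p = 0"
  unfolding VSF_def by blast
lemma vsf_nn: "\<xi> \<in> VSF g \<Longrightarrow> p \<in> relpairs g \<Longrightarrow> 0 \<le> \<xi> p"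
  unfolding VSF_def by blast
lemma vsf_NN: "\<xi> \<in> VSF g \<Longrightarrow> \<xi> (None, None) = 1"
  unfolding VSF_def by blast
lemma vsf_c1: "\<xi> \<in> VSF g \<Longrightarrow> I \<in> infosets g T1 \<Longrightarrow> s2 \<in> seqs g T2 \<Longrightarrow> rel_is_seq g I s2 \<Longrightarrow>
    (\<Sum>a \<in> acts_is g T1 I. \<xi> (Some (I, a), s2)) = \<xi> (parseq g T1 I, s2)"
  unfolding VSF_def by blast
lemma vsf_c2: "\<xi> \<in> VSF g \<Longrightarrow> J \<in> infosets g T2 \<Longrightarrow> s1 \<in> seqs g T1 \<Longrightarrow> rel_seq_is g s1 J \<Longrightarrow>
    (\<Sum>b \<in> acts_is g T2 J. \<xi> (s1, Some (J, b))) = \<xi> (s1, parseq g T2 J)"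
  unfolding VSF_def by blast

lemma vsf_x: "\<xi> \<in> VSF g \<Longrightarrow> rconstr g T1 (\<lambda>s. \<xi> (s, None))"
  unfolding rconstr_def
  by (auto intro!: vsf_nn relpairsI None_in_seqs rel_None2 vsf_c1 simp: rel_is_seq_def)

lemma vsf_y: "\<xi> \<in> VSF g \<Longrightarrow> rconstr g T2 (\<lambda>s. \<xi> (None, s))"
  unfolding rconstr_def
  by (auto intro!: vsf_nn relpairsI None_in_seqs rel_None1 vsf_c2 simp: rel_seq_is_def)

lemma sum_nonneg_zero_each:
  fixes f :: "'b \<Rightarrow> real"
  assumes "finite A" "\<forall>a\<in>A. 0 \<le> f a" "sum f A = 0" "a \<in> A"
  shows "f a = 0"
  using sum_nonneg_eq_0_iff[OF assms(1), of f] assms(2-4) by simp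

lemma claim1:
  assumes xi: "\<xi> \<in> VSF g" and s1: "s1 \<in> seqs g T1" and s2: "s2 \<in> seqs g T2"
    and r: "relevant g s1 s2" and z: "\<xi> (None, s2) = 0"
  shows "\<xi> (s1, s2) = 0"
  using s1
proof (cases rule: seqs_cases)
  case 1 then show ?thesis using z by simp
next
  case (2 I a)
  have "\<forall>a\<in>acts_is g T1 I. \<forall>s2\<in>seqs g T2. relevant g (Some (I, a)) s2 \<longrightarrow> \<xi> (None, s2) = 0 \<longrightarrow>
      \<xi> (Some (I, a), s2) = 0"
    using T1nc 2(2)
  proof (induction rule: infoset_induct)
    case (1 I)
    show ?case
    proof (intro ballI impI)
      fix a s2 assume a: "a \<in> acts_is g T1 I" and s2: "s2 \<in> seqs g T2"
        and r: "relevant g (Some (I, a)) s2" and z: "\<xi> (None, s2) = 0"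
      have ris: "rel_is_seq g I s2" using rel_is_seq_of[OF r] .
      have p0: "\<xi> (parseq g T1 I, s2) = 0"
      proof (cases rule: parseq_cases[OF T1nc 1(1)])
        case 1 then show ?thesis using z by simp
      next
        case (2 I' a')
        have "relevant g (Some (I', a')) s2" using rel_par1[OF ris] 2(1) by simp
        then have "\<xi> (Some (I', a'), s2) = 0" using "1.IH"[OF 2(1)] 2(3) s2 z by blast
        then show ?thesis using 2(1) by simp
      qed
      have sum0: "(\<Sum>a \<in> acts_is g T1 I. \<xi> (Some (I, a), s2)) = 0"
        using vsf_c1[OF xi 1(1) s2 ris] p0 by simp
      have nn: "\<forall>a\<in>acts_is g T1 I. 0 \<le> \<xi> (Some (I, a), s2)"
      proof
        fix a assume "a \<in> acts_is g T1 I"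
        then have "Some (I, a) \<in> seqs g T1" using 1(1) by (simp add: Some_in_seqs)
        then show "0 \<le> \<xi> (Some (I, a), s2)"
          using vsf_nn[OF xi relpairsI[OF _ s2 rel_of_is_seq[OF ris]]] by blast
      qed
      show "\<xi> (Some (I, a), s2) = 0"
        using sum_nonneg_zero_each[OF finite_acts_is nn sum0 a] .
    qed
  qed
  then have "\<xi> (Some (I, a), s2) = 0" using 2(3) s2 r[unfolded 2(1)] z by blast
  then show ?thesis unfolding 2(1) .
qed

lemma claim2:
  assumes xi: "\<xi> \<in> VSF g" and det: "\<forall>s2\<in>seqs g T2. \<xi> (None, s2) \<in> {0, 1}"
    and J: "J \<in> infosets g T2"
  shows "\<forall>b\<in>acts_is g T2 J. \<xi> (None, Some (J, b)) = 1 \<longrightarrow> (\<forall>s1\<in>seqs g T1.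
     relevant g s1 (Some (J, b)) \<longrightarrow> \<xi> (s1, Some (J, b)) = \<xi> (s1, None))"
  using T2nc J
proof (induction rule: infoset_induct)
  case (1 J)
  show ?case
  proof (intro ballI impI)
    fix b s1 assume b: "b \<in> acts_is g T2 J" and one: "\<xi> (None, Some (J, b)) = 1"
      and s1: "s1 \<in> seqs g T1" and r: "relevant g s1 (Some (J, b))"
    have y: "rconstr g T2 (\<lambda>s. \<xi> (None, s))" using vsf_y[OF xi] .
    have yle: "\<xi> (None, s) \<le> 1" if "s \<in> seqs g T2" for s
      using rconstr_le[OF T2nc y that] vsf_NN[OF xi] by simp
    have ppar: "\<xi> (None, parseq g T2 J) = 1"
      using rconstr_le_step[OF y 1(1) b] one yle[OF parseq_in_seqs[OF T2nc 1(1)]] by simp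
    have others: "\<xi> (None, Some (J, b')) = 0" if "b' \<in> acts_is g T2 J" "b' \<noteq> b" for b'
    proof -
      have "(\<Sum>b\<in>acts_is g T2 J. \<xi> (None, Some (J, b))) = 1"
        using rconstr_eq[OF y 1(1)] ppar by simp
      then have "\<xi> (None, Some (J, b)) + (\<Sum>b\<in>acts_is g T2 J - {b}. \<xi> (None, Some (J, b))) = 1"
        using sum.remove[OF finite_acts_is b, of "\<lambda>b. \<xi> (None, Some (J, b))"] by linarith
      then have "(\<Sum>b\<in>acts_is g T2 J - {b}. \<xi> (None, Some (J, b))) = 0" using one by simp
      moreover have "\<forall>c\<in>acts_is g T2 J - {b}. 0 \<le> \<xi> (None, Some (J, c))"
        using rconstr_nn_acts[OF y 1(1)] by blast
      moreover have "b' \<in> acts_is g T2 J - {b}" using that by simp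
      ultimately show ?thesis
        using sum_nonneg_zero_each[of "acts_is g T2 J - {b}" "\<lambda>c. \<xi> (None, Some (J, c))" b'] finite_acts_is
        by simp
    qed
    have rsi: "rel_seq_is g s1 J" using rel_seq_is_of[OF r] .
    have oz: "\<xi> (s1, Some (J, b')) = 0" if "b' \<in> acts_is g T2 J" "b' \<noteq> b" for b'
    proof -
      have "Some (J, b') \<in> seqs g T2" using that 1(1) by (simp add: Some_in_seqs)
      then show ?thesis using claim1[OF xi s1 _ rel_of_seq_is[OF rsi] others[OF that]] by blast
    qed
    have "(\<Sum>b \<in> acts_is g T2 J. \<xi> (s1, Some (J, b))) = \<xi> (s1, parseq g T2 J)"
      using vsf_c2[OF xi 1(1) s1 rsi] .
    moreover have "(\<Sum>b \<in> acts_is g T2 J. \<xi> (s1, Some (J, b))) = \<xi> (s1, Some (J, b))"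
    proof -
      have "(\<Sum>b \<in> acts_is g T2 J. \<xi> (s1, Some (J, b))) =
          \<xi> (s1, Some (J, b)) + (\<Sum>b\<in>acts_is g T2 J - {b}. \<xi> (s1, Some (J, b)))"
        using sum.remove[OF finite_acts_is b, of "\<lambda>b. \<xi> (s1, Some (J, b))"] by simp
      also have "(\<Sum>b\<in>acts_is g T2 J - {b}. \<xi> (s1, Some (J, b))) = 0"
        using oz by (intro sum.neutral) auto
      finally show ?thesis by simp
    qed
    ultimately have eq: "\<xi> (s1, Some (J, b)) = \<xi> (s1, parseq g T2 J)" by simp
    show "\<xi> (s1, Some (J, b)) = \<xi> (s1, None)"
    proof (cases rule: parseq_cases[OF T2nc 1(1)])
      case 1 then show ?thesis using eq by simp
    next
      case (2 J' b')
      have "relevant g s1 (Some (J', b'))" using rel_par2[OF rsi] 2(1) by simp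
      have "\<xi> (s1, Some (J', b')) = \<xi> (s1, None)"
        using "1.IH"[OF 2(1)] 2(3) ppar 2(1) s1 \<open>relevant g s1 (Some (J', b'))\<close> by auto
      then show ?thesis using eq 2(1) by simp
    qed
  qed
qed

lemma prod_T1:
  assumes xi: "\<xi> \<in> Xi_star_T1 g" and p: "(s1, s2) \<in> relpairs g"
  shows "\<xi> (s1, s2) = \<xi> (s1, None) * \<xi> (None, s2)"
proof -
  have v: "\<xi> \<in> VSF g" and det: "\<forall>s2\<in>seqs g T2. \<xi> (None, s2) \<in> {0, 1}"
    using xi unfolding Xi_star_T1_def by auto
  have s: "s1 \<in> seqs g T1" "s2 \<in> seqs g T2" "relevant g s1 s2" using relpairsD[OF p] by auto
  show ?thesis
  proof (cases "\<xi> (None, s2) = 0")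
    case True then show ?thesis using claim1[OF v s True] by simp
  next
    case False
    then have one: "\<xi> (None, s2) = 1" using det s(2) by auto
    show ?thesis using s(2)
    proof (cases rule: seqs_cases)
      case 1 then show ?thesis using one by simp
    next
      case (2 J b)
      then show ?thesis using claim2[OF v det 2(2)] one s by simp
    qed
  qed
qed

lemma claim1':
  assumes xi: "\<xi> \<in> VSF g" and s1: "s1 \<in> seqs g T1" and s2: "s2 \<in> seqs g T2"
    and r: "relevant g s1 s2" and z: "\<xi> (s1, None) = 0"
  shows "\<xi> (s1, s2) = 0"
  using s2
proof (cases rule: seqs_cases)
  case 1 then show ?thesis using z by simp
next
  case (2 J b)
  have "\<forall>b\<in>acts_is g T2 J. \<forall>s1\<in>seqs g T1. relevant g s1 (Some (J, b)) \<longrightarrow> \<xi> (s1, None) = 0 \<longrightarrow>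
      \<xi> (s1, Some (J, b)) = 0"
    using T2nc 2(2)
  proof (induction rule: infoset_induct)
    case (1 J)
    show ?case
    proof (intro ballI impI)
      fix b s1 assume b: "b \<in> acts_is g T2 J" and s1: "s1 \<in> seqs g T1"
        and r: "relevant g s1 (Some (J, b))" and z: "\<xi> (s1, None) = 0"
      have rsi: "rel_seq_is g s1 J" using rel_seq_is_of[OF r] .
      have p0: "\<xi> (s1, parseq g T2 J) = 0"
      proof (cases rule: parseq_cases[OF T2nc 1(1)])
        case 1 then show ?thesis using z by simp
      next
        case (2 J' b')
        have "relevant g s1 (Some (J', b'))" using rel_par2[OF rsi] 2(1) by simp
        then have "\<xi> (s1, Some (J', b')) = 0" using "1.IH"[OF 2(1)] 2(3) s1 z by blast
        then show ?thesis using 2(1) by simp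
      qed
      have sum0: "(\<Sum>b \<in> acts_is g T2 J. \<xi> (s1, Some (J, b))) = 0"
        using vsf_c2[OF xi 1(1) s1 rsi] p0 by simp
      have nn: "\<forall>b\<in>acts_is g T2 J. 0 \<le> \<xi> (s1, Some (J, b))"
      proof
        fix b assume "b \<in> acts_is g T2 J"
        then have "Some (J, b) \<in> seqs g T2" using 1(1) by (simp add: Some_in_seqs)
        then show "0 \<le> \<xi> (s1, Some (J, b))"
          using vsf_nn[OF xi relpairsI[OF s1 _ rel_of_seq_is[OF rsi]]] by blast
      qed
      show "\<xi> (s1, Some (J, b)) = 0"
        using sum_nonneg_zero_each[OF finite_acts_is nn sum0 b] .
    qed
  qed
  then have "\<xi> (s1, Some (J, b)) = 0" using 2(3) s1 r[unfolded 2(1)] z by blast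
  then show ?thesis unfolding 2(1) .
qed

lemma claim2':
  assumes xi: "\<xi> \<in> VSF g" and det: "\<forall>s1\<in>seqs g T1. \<xi> (s1, None) \<in> {0, 1}"
    and I: "I \<in> infosets g T1"
  shows "\<forall>a\<in>acts_is g T1 I. \<xi> (Some (I, a), None) = 1 \<longrightarrow> (\<forall>s2\<in>seqs g T2.
     relevant g (Some (I, a)) s2 \<longrightarrow> \<xi> (Some (I, a), s2) = \<xi> (None, s2))"
  using T1nc I
proof (induction rule: infoset_induct)
  case (1 I)
  show ?case
  proof (intro ballI impI)
    fix a s2 assume a: "a \<in> acts_is g T1 I" and one: "\<xi> (Some (I, a), None) = 1"
      and s2: "s2 \<in> seqs g T2" and r: "relevant g (Some (I, a)) s2"
    have y: "rconstr g T1 (\<lambda>s. \<xi> (s, None))" using vsf_x[OF xi] .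
    have yle: "\<xi> (s, None) \<le> 1" if "s \<in> seqs g T1" for s
      using rconstr_le[OF T1nc y that] vsf_NN[OF xi] by simp
    have ppar: "\<xi> (parseq g T1 I, None) = 1"
      using rconstr_le_step[OF y 1(1) a] one yle[OF parseq_in_seqs[OF T1nc 1(1)]] by simp
    have others: "\<xi> (Some (I, a'), None) = 0" if "a' \<in> acts_is g T1 I" "a' \<noteq> a" for a'
    proof -
      have "(\<Sum>a\<in>acts_is g T1 I. \<xi> (Some (I, a), None)) = 1"
        using rconstr_eq[OF y 1(1)] ppar by simp
      then have "\<xi> (Some (I, a), None) + (\<Sum>a\<in>acts_is g T1 I - {a}. \<xi> (Some (I, a), None)) = 1"
        using sum.remove[OF finite_acts_is a, of "\<lambda>a. \<xi> (Some (I, a), None)"] by linarith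
      then have "(\<Sum>a\<in>acts_is g T1 I - {a}. \<xi> (Some (I, a), None)) = 0" using one by simp
      moreover have "\<forall>c\<in>acts_is g T1 I - {a}. 0 \<le> \<xi> (Some (I, c), None)"
        using rconstr_nn_acts[OF y 1(1)] by blast
      moreover have "a' \<in> acts_is g T1 I - {a}" using that by simp
      ultimately show ?thesis
        using sum_nonneg_zero_each[of "acts_is g T1 I - {a}" "\<lambda>c. \<xi> (Some (I, c), None)" a'] finite_acts_is
        by simp
    qed
    have ris: "rel_is_seq g I s2" using rel_is_seq_of[OF r] .
    have oz: "\<xi> (Some (I, a'), s2) = 0" if "a' \<in> acts_is g T1 I" "a' \<noteq> a" for a'
    proof -
      have "Some (I, a') \<in> seqs g T1" using that 1(1) by (simp add: Some_in_seqs)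
      then show ?thesis using claim1'[OF xi _ s2 rel_of_is_seq[OF ris] others[OF that]] by blast
    qed
    have "(\<Sum>a \<in> acts_is g T1 I. \<xi> (Some (I, a), s2)) = \<xi> (parseq g T1 I, s2)"
      using vsf_c1[OF xi 1(1) s2 ris] .
    moreover have "(\<Sum>a \<in> acts_is g T1 I. \<xi> (Some (I, a), s2)) = \<xi> (Some (I, a), s2)"
    proof -
      have "(\<Sum>a \<in> acts_is g T1 I. \<xi> (Some (I, a), s2)) =
          \<xi> (Some (I, a), s2) + (\<Sum>a\<in>acts_is g T1 I - {a}. \<xi> (Some (I, a), s2))"
        using sum.remove[OF finite_acts_is a, of "\<lambda>a. \<xi> (Some (I, a), s2)"] by simp
      also have "(\<Sum>a\<in>acts_is g T1 I - {a}. \<xi> (Some (I, a), s2)) = 0"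
        using oz by (intro sum.neutral) auto
      finally show ?thesis by simp
    qed
    ultimately have eq: "\<xi> (Some (I, a), s2) = \<xi> (parseq g T1 I, s2)" by simp
    show "\<xi> (Some (I, a), s2) = \<xi> (None, s2)"
    proof (cases rule: parseq_cases[OF T1nc 1(1)])
      case 1 then show ?thesis using eq by simp
    next
      case (2 I' a')
      have "relevant g (Some (I', a')) s2" using rel_par1[OF ris] 2(1) by simp
      have "\<xi> (Some (I', a'), s2) = \<xi> (None, s2)"
        using "1.IH"[OF 2(1)] 2(3) ppar 2(1) s2 \<open>relevant g (Some (I', a')) s2\<close> by auto
      then show ?thesis using eq 2(1) by simp
    qed
  qed
qed

lemma prod_T2:
  assumes xi: "\<xi> \<in> Xi_star_T2 g" and p: "(s1, s2) \<in> relpairs g"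
  shows "\<xi> (s1, s2) = \<xi> (s1, None) * \<xi> (None, s2)"
proof -
  have v: "\<xi> \<in> VSF g" and det: "\<forall>s1\<in>seqs g T1. \<xi> (s1, None) \<in> {0, 1}"
    using xi unfolding Xi_star_T2_def by auto
  have s: "s1 \<in> seqs g T1" "s2 \<in> seqs g T2" "relevant g s1 s2" using relpairsD[OF p] by auto
  show ?thesis
  proof (cases "\<xi> (s1, None) = 0")
    case True then show ?thesis using claim1'[OF v s True] by simp
  next
    case False
    then have one: "\<xi> (s1, None) = 1" using det s(1) by auto
    show ?thesis using s(1)
    proof (cases rule: seqs_cases)
      case 1 then show ?thesis using one by simp
    next
      case (2 I a)
      then show ?thesis using claim2'[OF v det 2(2)] one s by simp
    qed
  qed
qed

end




context game begin

lemma DeltaD: "\<mu> \<in> Delta_T g \<Longrightarrow> (\<forall>x. 0 \<le> \<mu> x) \<and> (\<forall>x. x \<notin> rnf_plans g T1 \<times> rnf_plans g T2 \<longrightarrow> \<mu> x = 0) \<and>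
    (\<Sum>x \<in> rnf_plans g T1 \<times> rnf_plans g T2. \<mu> x) = 1"
  unfolding Delta_T_def by blast

lemma fmap_rel: "(s1, s2) \<in> relpairs g \<Longrightarrow>
    fmap g \<mu> (s1, s2) = (\<Sum>z \<in> plans_of g T1 s1 \<times> plans_of g T2 s2. \<mu> z)"
  unfolding fmap_def by (simp add: sum.cartesian_product)

lemma fmap_out: "p \<notin> relpairs g \<Longrightarrow> fmap g \<mu> p = 0"
  unfolding fmap_def by (cases p) auto

lemma vsf_in_XiT:
  assumes xi: "\<xi> \<in> VSF g" and pr: "\<forall>s1 s2. (s1, s2) \<in> relpairs g \<longrightarrow> \<xi> (s1, s2) = \<xi> (s1, None) * \<xi> (None, s2)"
  shows "\<xi> \<in> Xi_T g"
proof -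
  obtain p1 where p1: "\<forall>\<pi>. 0 \<le> p1 \<pi>" "\<forall>\<pi>. \<pi> \<notin> rnf_plans g T1 \<longrightarrow> p1 \<pi> = 0"
    "\<forall>s\<in>seqs g T1. \<xi> (s, None) = (\<Sum>\<pi>\<in>plans_of g T1 s. p1 \<pi>)"
    using decomp[OF T1nc vsf_x[OF xi]] by blast
  obtain p2 where p2: "\<forall>\<pi>. 0 \<le> p2 \<pi>" "\<forall>\<pi>. \<pi> \<notin> rnf_plans g T2 \<longrightarrow> p2 \<pi> = 0"
    "\<forall>s\<in>seqs g T2. \<xi> (None, s) = (\<Sum>\<pi>\<in>plans_of g T2 s. p2 \<pi>)"
    using decomp[OF T2nc vsf_y[OF xi]] by blast
  define \<mu> where "\<mu> z = p1 (fst z) * p2 (snd z)" for z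
  have prodsum: "(\<Sum>z \<in> A \<times> B. \<mu> z) = (\<Sum>\<pi>\<in>A. p1 \<pi>) * (\<Sum>\<pi>\<in>B. p2 \<pi>)" for A B
    unfolding \<mu>_def by (simp add: sum_product sum.cartesian_product split_beta)
  have "\<mu> \<in> Delta_T g"
    unfolding Delta_T_def
  proof (intro CollectI conjI allI impI)
    fix z show "0 \<le> \<mu> z" using p1(1) p2(1) by (simp add: \<mu>_def)
  next
    fix z assume "z \<notin> rnf_plans g T1 \<times> rnf_plans g T2"
    then show "\<mu> z = 0" using p1(2) p2(2) by (cases z) (auto simp: \<mu>_def)
  next
    have "(\<Sum>\<pi>\<in>rnf_plans g T1. p1 \<pi>) = 1"
      using p1(3) None_in_seqs vsf_NN[OF xi] by (simp add: plans_of_def)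
    moreover have "(\<Sum>\<pi>\<in>rnf_plans g T2. p2 \<pi>) = 1"
      using p2(3) None_in_seqs vsf_NN[OF xi] by (simp add: plans_of_def)
    ultimately show "(\<Sum>x \<in> rnf_plans g T1 \<times> rnf_plans g T2. \<mu> x) = 1" using prodsum by simp
  qed
  moreover have "fmap g \<mu> = \<xi>"
  proof
    fix q show "fmap g \<mu> q = \<xi> q"
    proof (cases "q \<in> relpairs g")
      case True
      obtain s1 s2 where q: "q = (s1, s2)" by (cases q)
      have s: "s1 \<in> seqs g T1" "s2 \<in> seqs g T2" using relpairsD True q by auto
      show ?thesis unfolding q using fmap_rel[OF True[unfolded q]] prodsum p1(3) p2(3) s pr True q
        by simp
    next
      case False then show ?thesis using fmap_out vsf_out[OF xi] by simp
    qed
  qed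
  ultimately show ?thesis unfolding Xi_T_def by blast
qed

lemma Xi1_sub: "Xi_star_T1 g \<subseteq> Xi_T g"
proof
  fix \<xi> assume a: "\<xi> \<in> Xi_star_T1 g"
  then have "\<xi> \<in> VSF g" unfolding Xi_star_T1_def by blast
  then show "\<xi> \<in> Xi_T g" using vsf_in_XiT prod_T1[OF a] by blast
qed

lemma Xi2_sub: "Xi_star_T2 g \<subseteq> Xi_T g"
proof
  fix \<xi> assume a: "\<xi> \<in> Xi_star_T2 g"
  then have "\<xi> \<in> VSF g" unfolding Xi_star_T2_def by blast
  then show "\<xi> \<in> Xi_T g" using vsf_in_XiT prod_T2[OF a] by blast
qed

lemma finite_rnf2: "finite (rnf_plans g T1 \<times> rnf_plans g T2)"
  using finite_rnf by simp

lemma conv_sub_XiT: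
  assumes S: "S \<subseteq> Xi_T g"
  shows "conv S \<subseteq> Xi_T g"
proof
  fix y assume "y \<in> conv S"
  then obtain k c p where kcp: "\<forall>j<(k::nat). 0 \<le> c j \<and> p j \<in> S" "(\<Sum>j<k. c j) = 1"
    "y = (\<lambda>q. \<Sum>j<k. c j * p j q)"
    unfolding conv_def by blast
  have "\<forall>j. \<exists>m. j < k \<longrightarrow> m \<in> Delta_T g \<and> p j = fmap g m"
    using kcp(1) S unfolding Xi_T_def by blast
  then obtain m where m: "\<And>j. j < k \<Longrightarrow> m j \<in> Delta_T g \<and> p j = fmap g (m j)"
    by metis
  define \<mu> where "\<mu> z = (\<Sum>j<k. c j * m j z)" for z
  have "\<mu> \<in> Delta_T g"
    unfolding Delta_T_def
  proof (intro CollectI conjI allI impI)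
    fix z show "0 \<le> \<mu> z" unfolding \<mu>_def
    proof (intro sum_nonneg)
      fix j assume "j \<in> {..<k}"
      then have j: "j < k" by simp
      have "0 \<le> m j z" using DeltaD m[OF j] by blast
      then show "0 \<le> c j * m j z" using kcp(1) j by simp
    qed
  next
    fix z assume "z \<notin> rnf_plans g T1 \<times> rnf_plans g T2"
    then have "\<forall>j\<in>{..<k}. m j z = 0" using m DeltaD by blast
    then show "\<mu> z = 0" unfolding \<mu>_def by simp
  next
    have "(\<Sum>x \<in> rnf_plans g T1 \<times> rnf_plans g T2. \<mu> x) =
        (\<Sum>j<k. c j * (\<Sum>x \<in> rnf_plans g T1 \<times> rnf_plans g T2. m j x))"
      unfolding \<mu>_def by (simp add: sum.swap[of _ _ "{..<k}"] sum_distrib_left)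
    also have "\<dots> = (\<Sum>j<k. c j)" using m DeltaD by (intro sum.cong) auto
    finally show "(\<Sum>x \<in> rnf_plans g T1 \<times> rnf_plans g T2. \<mu> x) = 1" using kcp(2) by simp
  qed
  moreover have "fmap g \<mu> = y"
  proof
    fix q show "fmap g \<mu> q = y q"
    proof (cases "q \<in> relpairs g")
      case True
      obtain s1 s2 where q: "q = (s1, s2)" by (cases q)
      have "fmap g \<mu> (s1, s2) = (\<Sum>j<k. c j * (\<Sum>z \<in> plans_of g T1 s1 \<times> plans_of g T2 s2. m j z))"
        unfolding fmap_rel[OF True[unfolded q]] \<mu>_def
        by (simp add: sum.swap[of _ _ "{..<k}"] sum_distrib_left)
      also have "\<dots> = (\<Sum>j<k. c j * p j (s1, s2))"
        using m fmap_rel[OF True[unfolded q]] by (intro sum.cong) auto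
      finally show ?thesis using kcp(3) q by simp
    next
      case False
      then show ?thesis using fmap_out m kcp(3) by simp
    qed
  qed
  ultimately show "y \<in> Xi_T g" unfolding Xi_T_def by blast
qed

definition dlt :: "('i, 'a) plan \<times> ('i, 'a) plan \<Rightarrow> ('i, 'a) plan \<times> ('i, 'a) plan \<Rightarrow> real" where
  "dlt z = (\<lambda>w. if w = z then 1 else 0)"

lemma fmap_lin:
  assumes mu: "\<mu> \<in> Delta_T g"
  shows "fmap g \<mu> q = (\<Sum>z \<in> rnf_plans g T1 \<times> rnf_plans g T2. \<mu> z * fmap g (dlt z) q)"
proof (cases "q \<in> relpairs g")
  case True
  obtain s1 s2 where q: "q = (s1, s2)" by (cases q)
  let ?A = "rnf_plans g T1 \<times> rnf_plans g T2"
  let ?P = "plans_of g T1 s1 \<times> plans_of g T2 s2"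
  have PA: "?P \<subseteq> ?A" using plans_of_sub by blast
  have fP: "finite ?P" using finite_plans_of by simp
  have d: "fmap g (dlt z) q = (if z \<in> ?P then 1 else 0)" for z
    unfolding q fmap_rel[OF True[unfolded q]] dlt_def using fP by simp
  have "(\<Sum>z \<in> ?A. \<mu> z * fmap g (dlt z) q) = (\<Sum>z \<in> ?A. if z \<in> ?P then \<mu> z else 0)"
    unfolding d by (intro sum.cong) auto
  also have "\<dots> = (\<Sum>z \<in> ?A \<inter> ?P. \<mu> z)" using finite_rnf2 by (simp add: sum.inter_restrict)
  also have "?A \<inter> ?P = ?P" using PA by blast
  finally show ?thesis unfolding q fmap_rel[OF True[unfolded q]] by simp
next
  case False then show ?thesis using fmap_out by simp
qed

lemma XiT_sub_conv:
  assumes S: "\<And>z. z \<in> rnf_plans g T1 \<times> rnf_plans g T2 \<Longrightarrow> fmap g (dlt z) \<in> S"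
  shows "Xi_T g \<subseteq> conv S"
proof
  fix y assume "y \<in> Xi_T g"
  then obtain \<mu> where mu: "\<mu> \<in> Delta_T g" "y = fmap g \<mu>" unfolding Xi_T_def by blast
  let ?A = "rnf_plans g T1 \<times> rnf_plans g T2"
  obtain xs where xs: "distinct xs" "set xs = ?A" using finite_distinct_list[OF finite_rnf2] by blast
  have bij: "bij_betw ((!) xs) {..<length xs} ?A" using bij_betw_nth[OF xs(1) refl] xs(2) by simp
  have re: "(\<Sum>j<length xs. f (xs ! j)) = (\<Sum>z\<in>?A. f z)" for f :: "_ \<Rightarrow> real"
    using sum.reindex_bij_betw[OF bij] by simp
  have mem: "xs ! j \<in> ?A" if "j < length xs" for j using xs(2) that nth_mem by blast
  show "y \<in> conv S"
    unfolding conv_def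
  proof (intro CollectI exI conjI allI impI)
    fix j assume j: "j < length xs"
    show "0 \<le> \<mu> (xs ! j)" using DeltaD[OF mu(1)] by blast
    show "fmap g (dlt (xs ! j)) \<in> S" using S mem j by blast
  next
    show "(\<Sum>j<length xs. \<mu> (xs ! j)) = 1" using re DeltaD[OF mu(1)] by simp
  next
    show "y = (\<lambda>q. \<Sum>j<length xs. \<mu> (xs ! j) * fmap g (dlt (xs ! j)) q)"
    proof
      fix q
      show "y q = (\<Sum>j<length xs. \<mu> (xs ! j) * fmap g (dlt (xs ! j)) q)"
        using mu(2) fmap_lin[OF mu(1), of q] re[of "\<lambda>z. \<mu> z * fmap g (dlt z) q"] by simp
    qed
  qed
qed

lemma dlt_star:
  assumes z: "z \<in> rnf_plans g T1 \<times> rnf_plans g T2"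
  shows "fmap g (dlt z) \<in> Xi_star_T1 g \<inter> Xi_star_T2 g"
proof -
  obtain \<pi>1 \<pi>2 where zz: "z = (\<pi>1, \<pi>2)" by (cases z)
  have p1: "\<pi>1 \<in> rnf_plans g T1" and p2: "\<pi>2 \<in> rnf_plans g T2" using z zz by auto
  define e where "e = fmap g (dlt z)"
  define i1 where "i1 s = (if \<pi>1 \<in> plans_of g T1 s then 1 else (0::real))" for s
  define i2 where "i2 s = (if \<pi>2 \<in> plans_of g T2 s then 1 else (0::real))" for s
  have ev: "e (s1, s2) = i1 s1 * i2 s2" if "(s1, s2) \<in> relpairs g" for s1 s2
  proof -
    have "e (s1, s2) = (if z \<in> plans_of g T1 s1 \<times> plans_of g T2 s2 then 1 else 0)"
      unfolding e_def fmap_rel[OF that] dlt_def using finite_plans_of by simp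
    then show ?thesis unfolding i1_def i2_def zz by simp
  qed
  have NN: "(None, None) \<in> relpairs g" by (simp add: relpairsI None_in_seqs rel_None1)
  have "e \<in> VSF g"
    unfolding VSF_def
  proof (intro CollectI conjI ballI allI impI)
    fix p assume "p \<notin> relpairs g" then show "e p = 0" unfolding e_def using fmap_out by simp
  next
    fix p assume p: "p \<in> relpairs g"
    obtain s1 s2 where pp: "p = (s1, s2)" by (cases p)
    show "0 \<le> e p" unfolding pp using ev p pp by (simp add: i1_def i2_def)
  next
    show "e (None, None) = 1" using ev[OF NN] p1 p2 by (simp add: i1_def i2_def plans_of_def)
  next
    fix I s2 assume I: "I \<in> infosets g T1" and s2: "s2 \<in> seqs g T2" and r: "rel_is_seq g I s2"
    have "(\<Sum>a\<in>acts_is g T1 I. e (Some (I, a), s2)) = (\<Sum>a\<in>acts_is g T1 I. i1 (Some (I, a)) * i2 s2)"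
    proof (intro sum.cong refl)
      fix a assume "a \<in> acts_is g T1 I"
      then have "(Some (I, a), s2) \<in> relpairs g"
        using I s2 r by (intro relpairsI rel_of_is_seq) (auto simp: Some_in_seqs)
      then show "e (Some (I, a), s2) = i1 (Some (I, a)) * i2 s2" using ev by blast
    qed
    also have "\<dots> = (\<Sum>a\<in>acts_is g T1 I. i1 (Some (I, a))) * i2 s2"
      by (simp add: sum_distrib_right)
    also have "\<dots> = i1 (parseq g T1 I) * i2 s2"
      using ind_constr[OF T1nc I p1] unfolding i1_def by simp
    also have "\<dots> = e (parseq g T1 I, s2)"
      using ev relpairsI[OF parseq_in_seqs[OF T1nc I] s2 rel_par1[OF r]] by simp
    finally show "(\<Sum>a\<in>acts_is g T1 I. e (Some (I, a), s2)) = e (parseq g T1 I, s2)" .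
  next
    fix J s1 assume J: "J \<in> infosets g T2" and s1: "s1 \<in> seqs g T1" and r: "rel_seq_is g s1 J"
    have "(\<Sum>b\<in>acts_is g T2 J. e (s1, Some (J, b))) = (\<Sum>b\<in>acts_is g T2 J. i1 s1 * i2 (Some (J, b)))"
    proof (intro sum.cong refl)
      fix b assume "b \<in> acts_is g T2 J"
      then have "(s1, Some (J, b)) \<in> relpairs g"
        using J s1 r by (intro relpairsI rel_of_seq_is) (auto simp: Some_in_seqs)
      then show "e (s1, Some (J, b)) = i1 s1 * i2 (Some (J, b))" using ev by blast
    qed
    also have "\<dots> = i1 s1 * (\<Sum>b\<in>acts_is g T2 J. i2 (Some (J, b)))"
      by (simp add: sum_distrib_left)
    also have "\<dots> = i1 s1 * i2 (parseq g T2 J)"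
      using ind_constr[OF T2nc J p2] unfolding i2_def by simp
    also have "\<dots> = e (s1, parseq g T2 J)"
      using ev relpairsI[OF s1 parseq_in_seqs[OF T2nc J] rel_par2[OF r]] by simp
    finally show "(\<Sum>b\<in>acts_is g T2 J. e (s1, Some (J, b))) = e (s1, parseq g T2 J)" .
  qed
  moreover have "\<forall>s2\<in>seqs g T2. e (None, s2) \<in> {0, 1}"
  proof
    fix s2 assume "s2 \<in> seqs g T2"
    then have "(None, s2) \<in> relpairs g" by (simp add: relpairsI None_in_seqs rel_None1)
    then show "e (None, s2) \<in> {0, 1}" using ev by (simp add: i1_def i2_def)
  qed
  moreover have "\<forall>s1\<in>seqs g T1. e (s1, None) \<in> {0, 1}"
  proof
    fix s1 assume "s1 \<in> seqs g T1"
    then have "(s1, None) \<in> relpairs g" by (simp add: relpairsI None_in_seqs rel_None2)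
    then show "e (s1, None) \<in> {0, 1}" using ev by (simp add: i1_def i2_def)
  qed
  ultimately show ?thesis unfolding e_def Xi_star_T1_def Xi_star_T2_def by blast
qed

theorem main:
  "Xi_T g = conv (Xi_star_T1 g) \<and> Xi_T g = conv (Xi_star_T2 g) \<and>
         Xi_T g = conv (Xi_star_T1 g \<union> Xi_star_T2 g)"
proof -
  have a: "Xi_T g \<subseteq> conv (Xi_star_T1 g)" by (rule XiT_sub_conv) (use dlt_star in blast)
  have b: "Xi_T g \<subseteq> conv (Xi_star_T2 g)" by (rule XiT_sub_conv) (use dlt_star in blast)
  have c: "Xi_T g \<subseteq> conv (Xi_star_T1 g \<union> Xi_star_T2 g)" by (rule XiT_sub_conv) (use dlt_star in blast)
  have a': "conv (Xi_star_T1 g) \<subseteq> Xi_T g" by (rule conv_sub_XiT[OF Xi1_sub])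
  have b': "conv (Xi_star_T2 g) \<subseteq> Xi_T g" by (rule conv_sub_XiT[OF Xi2_sub])
  have c': "conv (Xi_star_T1 g \<union> Xi_star_T2 g) \<subseteq> Xi_T g"
    by (rule conv_sub_XiT) (use Xi1_sub Xi2_sub in blast)
  show ?thesis using a b c a' b' c' by blast
qed

end


theorem proposition3:
  fixes g :: "('a, 'i) efg"
  assumes "wf_game g" and "perfect_recall g"
  shows "Xi_T g = conv (Xi_star_T1 g) \<and> Xi_T g = conv (Xi_star_T2 g) \<and>
         Xi_T g = conv (Xi_star_T1 g \<union> Xi_star_T2 g)"
proof -
  interpret game g using assms by (rule game.intro)
  show ?thesis by (rule main)
qed

end
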